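(* The Torricelli number is unbounded: for every $M>0$ there exists a compact convex solid $S\subset\mathbb{R}^3$ whose Torricelli number satisfies $\rho_{torr}(S)>M$.
   Context: For a compact convex solid $S$ with nonempty interior and a rotation $R$ of $\mathbb{R}^3$, let $S_R$ be the translate of $R(S)$ lying in $\{z\ge0\}$ and touching the plane $z=0$. The drainage time is $T(R)=\frac1K\iiint_{S_R} z^{-1/2}\,dV$ for a fixed constant $K>0$ (the drainage time from Torricelli's law with the orifice at the lowest point). With $T_{\max}$, $T_{\min}$ the maximum and minimum of $T(R)$ over all rotations, $\rho_{torr}(S)=T_{\max}/T_{\min}$. *)

theory Defs
  imports "HOL-Analysis.Analysis"
begin

text \<open>Coordinates of real^3 are indexed by the numeral type 3; the third (vertical, z)
  coordinate is x $ 3.\<close>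

definition convex_solid :: "(real^3) set \<Rightarrow> bool" where
  "convex_solid S \<longleftrightarrow> compact S \<and> convex S \<and> interior S \<noteq> {}"

definition rotations3 :: "(real^3^3) set" where
  "rotations3 = {R. orthogonal_matrix R \<and> det R = 1}"

definition lowest_height :: "(real^3) set \<Rightarrow> real^3^3 \<Rightarrow> real" where
  "lowest_height S R = Inf ((\<lambda>x. (R *v x) $ 3) ` S)"

definition placed :: "(real^3) set \<Rightarrow> real^3^3 \<Rightarrow> (real^3) set" where
  "placed S R = (\<lambda>x. R *v x - lowest_height S R *\<^sub>R axis 3 1) ` S"

definition drain_time :: "real \<Rightarrow> (real^3) set \<Rightarrow> real^3^3 \<Rightarrow> real" where
  "drain_time K S R = integral (placed S R) (\<lambda>x. (x $ 3) powr (-1/2)) / K"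

definition rho_torr :: "real \<Rightarrow> (real^3) set \<Rightarrow> real" where
  "rho_torr K S = (SUP R\<in>rotations3. drain_time K S R) / (INF R\<in>rotations3. drain_time K S R)"

end

theory Submission
  imports Defs
begin

abbreviation fz :: "real^3 \<Rightarrow> real" where "fz \<equiv> (\<lambda>x. (x $ 3) powr (-1/2))"

definition e3 :: "real^3" where "e3 = axis 3 1"

lemma e3_nth: "e3 $ i = (if i = 3 then 1 else 0)"
  by (simp add: e3_def axis_def)

lemma prod_3: "prod f (UNIV::3 set) = f 1 * f 2 * f 3"
  unfolding UNIV_3 by (simp add: ac_simps)

lemma fz_val: "0 < (y::real) \<Longrightarrow> y powr (-1/2) = 1 / sqrt y"
proof -
  assume y: "0 < y"
  have "y powr (-1/2) = y powr (- (1/2))" by simp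
  also have "\<dots> = 1 / y powr (1/2)" by (rule powr_minus_divide)
  also have "\<dots> = 1 / sqrt y" using y by (simp add: powr_half_sqrt)
  finally show ?thesis .
qed

lemma der3:
  fixes x :: "real^3"
  shows "((\<lambda>x::real^3. x + ((x$3)^2 - x$3) *\<^sub>R e3) has_derivative
     (\<lambda>h. h + (2 * x$3 * h$3 - h$3) *\<^sub>R e3)) (at x within T)"
  apply (rule derivative_eq_intros refl bounded_linear.has_derivative[OF bounded_linear_vec_nth] | simp)+
  apply (auto simp: fun_eq_iff algebra_simps)
  done

lemma detg: fixes x :: "real^3" shows "det (matrix (\<lambda>h::real^3. h + (2 * x$3 * h$3 - h$3) *\<^sub>R e3)) = 2 * x$3"
  by (simp add: det_3 matrix_def e3_def axis_def)

lemma box_ub: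
  fixes lo hi :: "real^3"
  assumes a1: "lo$1 \<le> hi$1" and a2: "lo$2 \<le> hi$2" and a3: "lo$3 = 0" and a4: "0 \<le> hi$3"
  shows "fz integrable_on cbox lo hi \<and>
         integral (cbox lo hi) fz \<le> 2 * ((hi$1 - lo$1) * (hi$2 - lo$2) * sqrt (hi$3))"
proof -
  define hi' :: "real^3" where "hi' = (\<chi> i. if i = 3 then sqrt (hi$3) else hi$i)"
  define T where "T = cbox lo hi'"
  define g where "g = (\<lambda>x::real^3. x + ((x$3)^2 - x$3) *\<^sub>R e3)"
  define g' where "g' = (\<lambda>(x::real^3) (h::real^3). h + (2 * x$3 * h$3 - h$3) *\<^sub>R e3)"
  have gnth: "g x $ i = (if i = 3 then (x$3)^2 else x$i)" for x i
    by (simp add: g_def e3_nth)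
  have hi'nth: "hi' $ i = (if i = 3 then sqrt (hi$3) else hi$i)" for i
    by (simp add: hi'_def)
  have gi: "g ` T = cbox lo hi"
  proof
    show "g ` T \<subseteq> cbox lo hi"
    proof
      fix y assume "y \<in> g ` T"
      then obtain x where x: "x \<in> T" "y = g x" by auto
      have "lo$i \<le> x$i \<and> x$i \<le> hi'$i" for i using x(1) by (simp add: T_def mem_box_cart)
      then have "lo$i \<le> y$i \<and> y$i \<le> hi$i" for i
        using x(2) a3 a4 
        apply (simp add: gnth hi'nth)
        by (metis a3 a4 power_mono real_sqrt_pow2 zero_le_power2)
      then show "y \<in> cbox lo hi" by (simp add: mem_box_cart)
    qed
    show "cbox lo hi \<subseteq> g ` T"
    proof
      fix y assume y: "y \<in> cbox lo hi"
      define x :: "real^3" where "x = (\<chi> i. if i = 3 then sqrt (y$3) else y$i)"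
      have yb: "lo$i \<le> y$i \<and> y$i \<le> hi$i" for i using y by (simp add: mem_box_cart)
      have "g x = y" using yb[of 3] a3 by (simp add: vec_eq_iff gnth x_def)
      moreover have "x \<in> T" using yb yb[of 3] a3 
        by (simp add: T_def mem_box_cart x_def hi'nth real_sqrt_le_mono)
      ultimately show "y \<in> g ` T" by blast
    qed
  qed
  have der: "\<And>x. x \<in> T \<Longrightarrow> (g has_derivative g' x) (at x within T)"
    unfolding g_def g'_def by (rule der3)
  have T3: "x \<in> T \<Longrightarrow> 0 \<le> x$3" for x
    using a3 by (simp add: T_def mem_box_cart) (erule allE[of _ 3], simp)
  have D: "\<bar>det (matrix (g' x))\<bar> * fz (g x) = 2" if "x \<in> T - {x. x$3 = 0}" for x
  proof -
    have p: "0 < x$3" using that T3[of x] by auto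
    have "fz (g x) = ((x$3)^2) powr (-1/2)" by (simp add: gnth)
    also have "\<dots> = 1 / sqrt ((x$3)^2)" using p by (intro fz_val) simp
    also have "\<dots> = 1 / x$3" using p by simp
    finally have "fz (g x) = 1 / x$3" .
    moreover have "det (matrix (g' x)) = 2 * x$3" unfolding g'_def by (rule detg)
    ultimately show ?thesis using p by simp
  qed
  have neg: "negligible {x::real^3. x$3 = 0}" by (rule negligible_standard_hyperplane_cart)
  have c2: "((\<lambda>x. 2::real) has_integral (Henstock_Kurzweil_Integration.content T *\<^sub>R 2)) T"
    unfolding T_def by (rule has_integral_const)
  have hi: "((\<lambda>x. \<bar>det (matrix (g' x))\<bar> * fz (g x)) has_integral (Henstock_Kurzweil_Integration.content T *\<^sub>R 2)) T"
    by (rule has_integral_spike[OF neg _ c2]) (use D in simp)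
  have nonneg: "\<And>x. x \<in> T \<Longrightarrow> 0 \<le> fz (g x)" by simp
  have intS: "(\<lambda>x. \<bar>det (matrix (g' x))\<bar> * fz (g x)) integrable_on T"
    using hi by (rule has_integral_integrable)
  have ival: "integral T (\<lambda>x. \<bar>det (matrix (g' x))\<bar> * fz (g x)) = Henstock_Kurzweil_Integration.content T * 2"
    using hi by (simp add: integral_unique)
  have r: "fz integrable_on cbox lo hi \<and> integral (cbox lo hi) fz \<le> Henstock_Kurzweil_Integration.content T * 2"
    using integral_on_image_ubound_nonneg[OF nonneg der intS] unfolding gi ival .
  have "lo \<in> T" unfolding T_def mem_box_cart using a1 a2 a3 a4
    by (simp add: forall_3 hi'nth)
  then have "T \<noteq> {}" by blast
  then have "Henstock_Kurzweil_Integration.content T = (hi$1 - lo$1) * (hi$2 - lo$2) * sqrt (hi$3)"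
    unfolding T_def by (simp add: content_cbox_cart prod_3 hi'nth a3)
  with r show ?thesis by (simp add: mult.commute)
qed


lemma orth_norm: "orthogonal_matrix R \<Longrightarrow> norm (R *v x) = norm (x::real^3)"
proof -
  assume "orthogonal_matrix R"
  then have "orthogonal_transformation (\<lambda>x. R *v x)"
    by (simp add: orthogonal_transformation_matrix)
  then show ?thesis by (rule orthogonal_transformation_norm)
qed

lemma lb_box:
  fixes a b :: "real^3"
  assumes ab: "\<forall>i. a$i \<le> b$i" and a3: "0 < a$3" and sub: "cbox a b \<subseteq> A"
    and intA: "fz integrable_on A"
  shows "Henstock_Kurzweil_Integration.content (cbox a b) * (1 / sqrt (b$3)) \<le> integral A fz"
proof -
  have pos: "x \<in> cbox a b \<Longrightarrow> 0 < x$3" for x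
    using a3 by (simp add: mem_box_cart) (erule allE[of _ 3], simp)
  have cont: "continuous_on (cbox a b) fz"
    by (intro continuous_intros) (auto dest: pos)
  have ib: "fz integrable_on cbox a b" using cont by (rule integrable_continuous)
  have "integral (cbox a b) (\<lambda>x. 1 / sqrt (b$3)) \<le> integral (cbox a b) fz"
  proof (rule integral_le)
    show "(\<lambda>x. 1 / sqrt (b$3)) integrable_on cbox a b" by (intro integrable_continuous continuous_intros)
    show "fz integrable_on cbox a b" by (rule ib)
    fix x assume x: "x \<in> cbox a b"
    have p: "0 < x$3" using pos[OF x] .
    have le: "x$3 \<le> b$3" using x by (simp add: mem_box_cart)
    have "fz x = 1 / sqrt (x$3)" using p by (intro fz_val)
    moreover have "1 / sqrt (b$3) \<le> 1 / sqrt (x$3)"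
      using p le by (intro divide_left_mono) auto
    ultimately show "1 / sqrt (b$3) \<le> fz x" by simp
  qed
  also have "\<dots> \<le> integral A fz"
    by (rule integral_subset_le[OF sub ib intA]) simp
  finally show ?thesis by simp
qed

locale solid =
  fixes S :: "(real^3) set" and D :: real and R :: "real^3^3"
  assumes cS: "compact S" and neS: "S \<noteq> {}" and DS: "\<And>x. x \<in> S \<Longrightarrow> norm x \<le> D"
    and oR: "orthogonal_matrix R"
begin

lemma D0: "0 \<le> D" using neS DS norm_ge_zero order.trans by blast

lemma comp_bound: "x \<in> S \<Longrightarrow> \<bar>(R *v x)$i\<bar> \<le> D"
  using component_le_norm_cart[of "R *v x" i] orth_norm[OF oR, of x] DS[of x] by simp

lemma lh_le: "x \<in> S \<Longrightarrow> lowest_height S R \<le> (R *v x)$3"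
  unfolding lowest_height_def
proof (rule cInf_lower)
  show "x \<in> S \<Longrightarrow> (R *v x)$3 \<in> (\<lambda>x. (R *v x)$3) ` S" by simp
  show "bdd_below ((\<lambda>x. (R *v x)$3) ` S)"
  proof (rule bdd_belowI2[of _ "- D"])
    fix x assume "x \<in> S"
    then show "- D \<le> (R *v x)$3" using comp_bound[of x 3] by (simp add: abs_le_iff)
  qed
qed

lemma lh_ge: "- D \<le> lowest_height S R"
  unfolding lowest_height_def
proof (rule cInf_greatest)
  show "(\<lambda>x. (R *v x)$3) ` S \<noteq> {}" using neS by simp
  fix y assume "y \<in> (\<lambda>x. (R *v x)$3) ` S"
  then obtain x where "x \<in> S" "y = (R *v x)$3" by blast
  then show "- D \<le> y" using comp_bound[of x 3] by (simp add: abs_le_iff)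
qed

definition Blo :: "real^3" where "Blo = (\<chi> i. if i = 3 then 0 else - D)"
definition Bhi :: "real^3" where "Bhi = (\<chi> i. if i = 3 then 2 * D else D)"

lemma placed_nth: "(R *v x - c *\<^sub>R axis 3 1) $ i = (R *v x)$i - (if i = 3 then c else 0)"
  by (simp add: axis_def)

lemma placed_box: "placed S R \<subseteq> cbox Blo Bhi"
proof
  fix y assume "y \<in> placed S R"
  then obtain x where x: "x \<in> S" and y: "y = R *v x - lowest_height S R *\<^sub>R axis 3 1"
    unfolding placed_def by auto
  have "Blo$i \<le> y$i \<and> y$i \<le> Bhi$i" for i
    using comp_bound[OF x, of i] lh_le[OF x] lh_ge comp_bound[OF x, of 3]
    unfolding y placed_nth Blo_def Bhi_def by (auto simp: abs_le_iff)
  then show "y \<in> cbox Blo Bhi" by (simp add: mem_box_cart)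
qed

lemma placed_nonneg: "y \<in> placed S R \<Longrightarrow> 0 \<le> y$3"
proof -
  assume "y \<in> placed S R"
  then have "y \<in> cbox Blo Bhi" using placed_box by blast
  then have "Blo$3 \<le> y$3" by (simp add: mem_box_cart)
  then show ?thesis by (simp add: Blo_def)
qed

lemma placed_compact: "compact (placed S R)"
  unfolding placed_def
proof (rule compact_continuous_image[OF _ cS])
  have "continuous_on UNIV (\<lambda>x. R *v x)"
    by (simp add: linear_continuous_on linear_conv_bounded_linear)
  then show "continuous_on S (\<lambda>x. R *v x - lowest_height S R *\<^sub>R axis 3 1)"
    by (intro continuous_intros)
qed

lemma fz_int_placed: "fz integrable_on placed S R \<and> integral (placed S R) fz \<le> 2 * ((2*D) * (2*D) * sqrt (2*D))"
proof -
  have bu: "fz integrable_on cbox Blo Bhi \<and> integral (cbox Blo Bhi) fz \<le> 2 * ((Bhi$1 - Blo$1) * (Bhi$2 - Blo$2) * sqrt (Bhi$3))"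
    by (rule box_ub) (use D0 in \<open>simp_all add: Blo_def Bhi_def\<close>)
  have ai: "fz absolutely_integrable_on cbox Blo Bhi"
    using bu by (intro nonnegative_absolutely_integrable_1) auto
  have ms: "placed S R \<in> sets lebesgue"
    using lmeasurable_compact[OF placed_compact] by auto
  have "fz absolutely_integrable_on placed S R"
    by (rule set_integrable_subset[OF ai ms placed_box])
  then have ip: "fz integrable_on placed S R"
    by (rule set_lebesgue_integral_eq_integral(1))
  have "integral (placed S R) fz \<le> integral (cbox Blo Bhi) fz"
    by (rule integral_subset_le[OF placed_box ip]) (use bu in auto)
  also have "\<dots> \<le> 2 * ((2*D) * (2*D) * sqrt (2*D))"
    using bu by (simp add: Blo_def Bhi_def)
  finally show ?thesis using ip by simp
qed

lemma Rinv: "R *v (transpose R *v v) = v"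
  using oR unfolding orthogonal_matrix_def by (metis matrix_vector_mul_assoc matrix_vector_mul_lid)

lemma ball_in_placed:
  assumes pS: "cball p (1/2) \<subseteq> S"
  shows "cball (R *v p - lowest_height S R *\<^sub>R axis 3 1) (1/2) \<subseteq> placed S R"
proof
  define q where "q = R *v p - lowest_height S R *\<^sub>R axis 3 1"
  fix y assume y: "y \<in> cball (R *v p - lowest_height S R *\<^sub>R axis 3 1) (1/2)"
  then have yq: "norm (y - q) \<le> 1/2" unfolding q_def by (simp add: dist_norm norm_minus_commute)
  define x where "x = p + transpose R *v (y - q)"
  have "norm (x - p) = norm (y - q)"
    unfolding x_def using orth_norm[of "transpose R" "y - q"] oR by simp
  then have "x \<in> cball p (1/2)" using yq by (simp add: dist_norm norm_minus_commute)
  then have xS: "x \<in> S" using pS by blast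
  have "R *v x = R *v p + (y - q)"
    unfolding x_def by (simp only: matrix_vector_right_distrib Rinv)
  then have "y = R *v x - lowest_height S R *\<^sub>R axis 3 1"
    unfolding q_def by simp
  then show "y \<in> placed S R" using xS unfolding placed_def by blast
qed

lemma T_lower:
  assumes pS: "cball p (1/2) \<subseteq> S"
  shows "(1/64) * (1 / sqrt (2*D + 1)) \<le> integral (placed S R) fz"
proof -
  define q where "q = R *v p - lowest_height S R *\<^sub>R axis 3 1"
  have pS': "p \<in> S" using pS by auto
  have bp: "cball q (1/2) \<subseteq> placed S R" unfolding q_def by (rule ball_in_placed[OF pS])
  have "q - (1/2) *\<^sub>R axis 3 1 \<in> cball q (1/2)" by (simp add: dist_norm)
  then have "0 \<le> (q - (1/2) *\<^sub>R axis 3 1)$3" using bp placed_nonneg by blast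
  then have q3a: "1/2 \<le> q$3" by (simp add: axis_def)
  have q3b: "q$3 \<le> 2 * D"
    using comp_bound[OF pS', of 3] lh_ge unfolding q_def by (simp add: axis_def abs_le_iff)
  define a :: "real^3" where "a = (\<chi> i. q$i - 1/8)"
  define b :: "real^3" where "b = (\<chi> i. q$i + 1/8)"
  have sub: "cbox a b \<subseteq> placed S R"
  proof
    fix y assume yin: "y \<in> cbox a b"
    have yb: "\<forall>i. a$i \<le> y$i \<and> y$i \<le> b$i" using yin by (simp add: mem_box_cart)
    have c: "\<bar>(q - y)$i\<bar> \<le> 1/8" for i
    proof -
      have "q$i - 1/8 \<le> y$i" "y$i \<le> q$i + 1/8" using yb[rule_format, of i] by (simp_all add: a_def b_def)
      then show ?thesis by (simp only: vector_minus_component abs_le_iff) linarith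
    qed
    have "norm (q - y) \<le> sum (\<lambda>i. \<bar>(q - y)$i\<bar>) UNIV" by (rule norm_le_l1_cart)
    also have "\<dots> \<le> 3/8" unfolding sum_3 using c[of 1] c[of 2] c[of 3] by simp
    finally have "y \<in> cball q (1/2)" by (simp add: dist_norm)
    then show "y \<in> placed S R" using bp by blast
  qed
  have X: "Henstock_Kurzweil_Integration.content (cbox a b) * (1 / sqrt (b$3)) \<le> integral (placed S R) fz"
    by (rule lb_box[OF _ _ sub]) (use q3a fz_int_placed in \<open>simp_all add: a_def b_def\<close>)
  have "q \<in> cbox a b" by (simp add: mem_box_cart a_def b_def)
  then have "cbox a b \<noteq> {}" by blast
  then have C: "Henstock_Kurzweil_Integration.content (cbox a b) = 1/64"
    by (simp add: content_cbox_cart prod_3 a_def b_def power3_eq_cube)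
  have Y: "1 / sqrt (2*D + 1) \<le> 1 / sqrt (b$3)"
    using q3a q3b by (intro divide_left_mono) (auto simp: b_def)
  have "(1/64) * (1 / sqrt (2*D + 1)) \<le> (1/64) * (1 / sqrt (b$3))"
    using Y by (rule mult_left_mono) simp
  also have "\<dots> \<le> integral (placed S R) fz" using X unfolding C .
  finally show ?thesis .
qed

end


definition Lv :: "real \<Rightarrow> real^3" where "Lv L = (\<chi> i. if i = 3 then L else 1)"
definition SS :: "real \<Rightarrow> (real^3) set" where "SS L = cbox 0 (Lv L)"
definition Pc :: "real^3^3" where
  "Pc = (\<chi> i j. if (i = 1 \<and> j = 3) \<or> (i = 2 \<and> j = 1) \<or> (i = 3 \<and> j = 2) then 1 else 0)"

lemma SS_mem: "x \<in> SS L \<longleftrightarrow> (0 \<le> x$1 \<and> x$1 \<le> 1) \<and> (0 \<le> x$2 \<and> x$2 \<le> 1) \<and> (0 \<le> x$3 \<and> x$3 \<le> L)"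
  by (simp add: SS_def mem_box_cart forall_3 Lv_def)

lemma SS_ball: "1 \<le> L \<Longrightarrow> cball (\<chi> i. 1/2) (1/2) \<subseteq> SS L"
proof
  fix y :: "real^3" assume L: "1 \<le> L" and y: "y \<in> cball (\<chi> i. 1/2) (1/2)"
  have "\<bar>((\<chi> i. 1/2) - y)$i\<bar> \<le> 1/2" for i
    using component_le_norm_cart[of "(\<chi> i. 1/2) - y" i] y by (simp add: dist_norm)
  then have h: "\<bar>1/2 - y$i\<bar> \<le> 1/2" for i by simp
  have "0 \<le> y$i \<and> y$i \<le> 1" for i using h[of i] unfolding abs_le_iff by linarith
  then show "y \<in> SS L" using L unfolding SS_mem by (meson order_trans)
qed

lemma SS_solid: "1 \<le> L \<Longrightarrow> convex_solid (SS L)"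
proof -
  assume L: "1 \<le> L"
  have "(\<chi> i. 1/2) \<in> box 0 (Lv L)" using L by (simp add: mem_box_cart Lv_def)
  then show ?thesis unfolding convex_solid_def SS_def
    by (auto simp: compact_cbox convex_box)
qed

lemma id_rot: "mat 1 \<in> rotations3"
  by (simp add: rotations3_def orthogonal_matrix_id)

lemma Pc_mul: "Pc *v x = (\<chi> i. if i = 1 then x$3 else if i = 2 then x$1 else x$2)"
  by (simp add: vec_eq_iff forall_3 matrix_vector_mult_def sum_3 Pc_def)

lemma Pc_rot: "Pc \<in> rotations3"
proof -
  have "transpose Pc ** Pc = mat 1"
    by (simp add: vec_eq_iff forall_3 matrix_matrix_mult_def sum_3 Pc_def transpose_def mat_def)
  moreover have "det Pc = 1" by (simp add: det_3 Pc_def)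
  ultimately show ?thesis by (simp add: rotations3_def orthogonal_matrix)
qed

lemma lh_id: "lowest_height (SS L) (mat 1) = 0" if "0 \<le> L"
  unfolding lowest_height_def
proof (rule cInf_eq_minimum)
  show "0 \<in> (\<lambda>x. (mat 1 *v x)$3) ` SS L"
    using that by (auto simp: SS_mem intro!: image_eqI[of _ _ 0])
  fix y assume "y \<in> (\<lambda>x. (mat 1 *v x)$3) ` SS L"
  then show "0 \<le> y" by (auto simp: SS_mem)
qed

lemma placed_id: "placed (SS L) (mat 1) = SS L" if "0 \<le> L"
  unfolding placed_def lh_id[OF that] by simp

lemma lh_Pc: "lowest_height (SS L) Pc = 0" if "0 \<le> L"
  unfolding lowest_height_def
proof (rule cInf_eq_minimum)
  show "0 \<in> (\<lambda>x. (Pc *v x)$3) ` SS L"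
    using that by (auto simp: SS_mem Pc_mul intro!: image_eqI[of _ _ 0])
  fix y assume "y \<in> (\<lambda>x. (Pc *v x)$3) ` SS L"
  then show "0 \<le> y" by (auto simp: SS_mem Pc_mul)
qed

lemma B1_sub: "cbox (\<chi> i. if i = 3 then 1/2 else 0) (\<chi> i. if i = 1 then L else 1) \<subseteq> placed (SS L) Pc"
  if L: "0 \<le> L"
proof
  fix y :: "real^3"
  assume "y \<in> cbox (\<chi> i. if i = 3 then 1/2 else 0) (\<chi> i. if i = 1 then L else 1)"
  then have yb: "0 \<le> y$1" "y$1 \<le> L" "0 \<le> y$2" "y$2 \<le> 1" "1/2 \<le> y$3" "y$3 \<le> 1"
    by (simp_all add: mem_box_cart forall_3)
  define x :: "real^3" where "x = (\<chi> i. if i = 1 then y$2 else if i = 2 then y$3 else y$1)"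
  have xS: "x \<in> SS L" using yb by (simp add: SS_mem x_def)
  have "y = Pc *v x - lowest_height (SS L) Pc *\<^sub>R axis 3 1"
    unfolding lh_Pc[OF L] by (simp add: Pc_mul x_def vec_eq_iff forall_3)
  then show "y \<in> placed (SS L) Pc" unfolding placed_def using xS by blast
qed

theorem corollary2:
  fixes K M :: real
  assumes "K > 0" and "M > 0"
  shows "\<exists>S. convex_solid S \<and> rho_torr K S > M"
proof -
  define s where "s = 4*M + 4"
  define L where "L = s^2"
  have s4: "4 \<le> s" using assms(2) by (simp add: s_def)
  then have s0: "0 < s" by simp
  have L1: "1 \<le> L" unfolding L_def using s4 by (intro one_le_power) simp
  have L0: "0 \<le> L" using L1 by simp
  have sqL: "sqrt L = s" using s0 by (simp add: L_def)
  let ?S = "SS L"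
  have cS: "compact ?S" by (simp add: SS_def compact_cbox)
  then obtain D where D: "\<forall>x\<in>?S. norm x \<le> D" using compact_imp_bounded bounded_iff by metis
  have cen: "((\<chi> i. (1/2::real)) :: real^3) \<in> ?S" using SS_ball[OF L1] centre_in_cball[of "(\<chi> i. (1/2::real)) :: real^3" "1/2"] by auto
  then have neS: "?S \<noteq> {}" by blast
  have D0: "0 \<le> D" using D cen norm_ge_zero order_trans by blast
  have sol: "solid ?S D R" if "R \<in> rotations3" for R
    using that cS neS D unfolding solid_def rotations3_def by auto
  define c0 where "c0 = (1/64) * (1 / sqrt (2*D + 1))"
  define B where "B = 2 * ((2*D) * (2*D) * sqrt (2*D))"
  have dt: "drain_time K ?S R = integral (placed ?S R) fz / K" for R by (simp add: drain_time_def)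
  have lo: "c0 / K \<le> drain_time K ?S R" if "R \<in> rotations3" for R
    unfolding dt c0_def
    by (rule divide_right_mono[OF solid.T_lower[OF sol[OF that] SS_ball[OF L1]]]) (use assms(1) in simp)
  have hi: "drain_time K ?S R \<le> B / K" if "R \<in> rotations3" for R
    unfolding dt B_def using conjunct2[OF solid.fz_int_placed[OF sol[OF that]]] assms(1)
    by (simp add: divide_right_mono)
  have bda: "bdd_above (drain_time K ?S ` rotations3)" by (rule bdd_aboveI2) (rule hi)
  have bdb: "bdd_below (drain_time K ?S ` rotations3)" by (rule bdd_belowI2) (rule lo)
  have ne: "rotations3 \<noteq> {}" using id_rot by blast
  have c0pos: "0 < c0" unfolding c0_def using D0 by simp
  define lo3 :: "real^3" where "lo3 = (\<chi> i. if i = 3 then 1/2 else 0)"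
  define hi3 :: "real^3" where "hi3 = (\<chi> i. if i = 1 then L else 1)"
  have "lo3 \<in> cbox lo3 hi3" using L1 by (simp add: lo3_def hi3_def mem_box_cart forall_3)
  then have ne3: "cbox lo3 hi3 \<noteq> {}" by blast
  have "Henstock_Kurzweil_Integration.content (cbox lo3 hi3) * (1 / sqrt (hi3$3)) \<le> integral (placed ?S Pc) fz"
    by (rule lb_box[OF _ _ B1_sub[OF L0, folded lo3_def hi3_def] conjunct1[OF solid.fz_int_placed[OF sol[OF Pc_rot]]]])
       (use L1 in \<open>simp_all add: lo3_def hi3_def forall_3\<close>)
  moreover have "Henstock_Kurzweil_Integration.content (cbox lo3 hi3) = L / 2"
    unfolding content_cbox_cart[OF ne3] prod_3 by (simp add: lo3_def hi3_def)
  ultimately have i1: "L / 2 \<le> integral (placed ?S Pc) fz" by (simp add: hi3_def)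
  have Tpc: "L/2/K \<le> drain_time K ?S Pc"
    unfolding dt using divide_right_mono[OF i1, of K] assms(1) by simp
  have "integral ?S fz \<le> 2 * ((Lv L$1 - (0::real^3)$1) * (Lv L$2 - (0::real^3)$2) * sqrt (Lv L$3))"
    unfolding SS_def by (rule conjunct2[OF box_ub]) (use L0 in \<open>simp_all add: Lv_def\<close>)
  then have i2: "integral ?S fz \<le> 2 * s" by (simp add: Lv_def sqL)
  have Tid: "drain_time K ?S (mat 1) \<le> 2 * s / K"
    unfolding dt placed_id[OF L0] using divide_right_mono[OF i2, of K] assms(1) by simp
  define supv where "supv = (SUP R\<in>rotations3. drain_time K ?S R)"
  define infv where "infv = (INF R\<in>rotations3. drain_time K ?S R)"
  have sup_ge: "L/2/K \<le> supv" unfolding supv_def using cSUP_upper[OF Pc_rot bda] Tpc by linarith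
  have inf_le: "infv \<le> 2 * s / K" unfolding infv_def using cINF_lower[OF bdb id_rot] Tid by linarith
  have "c0 / K \<le> infv" unfolding infv_def by (rule cINF_greatest[OF ne lo])
  then have inf_pos: "0 < infv" using c0pos assms(1) by (smt (verit) divide_pos_pos)
  have L2: "0 \<le> L/2/K" using L0 assms(1) by simp
  have "(L/2/K) / (2 * s / K) \<le> supv / infv"
    by (rule frac_le) (use L2 sup_ge inf_pos inf_le in auto)
  moreover have "(L/2/K) / (2 * s / K) = s / 4"
    using s0 assms(1) unfolding L_def by (simp add: field_simps power2_eq_square)
  moreover have "s / 4 > M" unfolding s_def by simp
  ultimately have "rho_torr K ?S > M" unfolding rho_torr_def supv_def infv_def by linarith
  then show ?thesis using SS_solid[OF L1] by blast
qed

end
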